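(* Let $\nu(x)=\sum_{k=0}^\infty\nu_kL_k(x)$ on $I=(-1,1)$, and for $m,n\ge2$ let $a^{(1)}_{m,n}:=\int_{-1}^1\nu(x)\,D\eta_m(x)\,D\eta_n(x)\,dx$. If there exist $\eta>0$ and a constant $C_\eta>0$ depending only on $\eta$ such that $|\nu_k|\le C_\eta e^{-\eta k}$ for all $k\ge0$, then $$|a^{(1)}_{m,n}|\le C e^{-\eta|n-m|}\qquad\forall\, n,m\ge2,$$ where $C$ is a constant depending only on $\eta$.
   Context: $I=(-1,1)$, $D=d/dx$. $L_k$ denotes the Legendre polynomial of degree $k$ normalized by $L_k(1)=1$, so $\int_I L_kL_m\,dx=\frac{2}{2k+1}\delta_{km}$. The Babuška–Shen basis is $\eta_k(x)=\sqrt{k-1/2}\int_x^1L_{k-1}(s)\,ds=\frac{1}{\sqrt{4k-2}}(L_{k-2}(x)-L_k(x))$, $k\ge2$; it satisfies $D\eta_k=-\sqrt{k-1/2}\,L_{k-1}$. *)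

theory Defs
  imports "HOL-Analysis.Analysis"
begin

fun legendre :: "nat \<Rightarrow> real \<Rightarrow> real" where
  "legendre 0 x = 1"
| "legendre (Suc 0) x = x"
| "legendre (Suc (Suc k)) x =
     ((2 * real k + 3) * x * legendre (Suc k) x - (real k + 1) * legendre k x) / (real k + 2)"

definition bs_eta :: "nat \<Rightarrow> real \<Rightarrow> real" where
  "bs_eta k x = (legendre (k - 2) x - legendre k x) / sqrt (4 * real k - 2)"

definition legendre_series :: "(nat \<Rightarrow> real) \<Rightarrow> real \<Rightarrow> real" where
  "legendre_series c x = (\<Sum>k. c k * legendre k x)"

definition a1 :: "(nat \<Rightarrow> real) \<Rightarrow> nat \<Rightarrow> nat \<Rightarrow> real" where
  "a1 c m n = integral {-1..1}
     (\<lambda>x. legendre_series c x * deriv (bs_eta m) x * deriv (bs_eta n) x)"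

end

theory Submission
  imports Defs
begin

abbreviation L where "L \<equiv> legendre"

fun dleg :: "nat \<Rightarrow> real \<Rightarrow> real" where
  "dleg 0 x = 0"
| "dleg (Suc 0) x = 1"
| "dleg (Suc (Suc k)) x =
     ((2 * real k + 3) * (legendre (Suc k) x + x * dleg (Suc k) x) - (real k + 1) * dleg k x) / (real k + 2)"

fun ddleg :: "nat \<Rightarrow> real \<Rightarrow> real" where
  "ddleg 0 x = 0"
| "ddleg (Suc 0) x = 0"
| "ddleg (Suc (Suc k)) x =
     ((2 * real k + 3) * (2 * dleg (Suc k) x + x * ddleg (Suc k) x) - (real k + 1) * ddleg k x) / (real k + 2)"

lemma leg_rec: "(real k + 1) * L (Suc k) x = (2 * real k + 1) * x * L k x - real k * L (k - 1) x"
proof (cases k)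
  case 0 then show ?thesis by simp
next
  case (Suc j) then show ?thesis by (simp add: field_simps)
qed

lemma dleg_rec: "(real k + 1) * dleg (Suc k) x = (2 * real k + 1) * (L k x + x * dleg k x) - real k * dleg (k - 1) x"
proof (cases k)
  case 0 then show ?thesis by simp
next
  case (Suc j) then show ?thesis by (simp add: field_simps)
qed

lemma leg_DERIV: "(L k has_real_derivative dleg k x) (at x)"
proof (induction k x rule: legendre.induct)
  case (1 x) then show ?case by simp
next
  case (2 x) then show ?case by simp
next
  case (3 k x)
  have e: "L (Suc (Suc k)) = (\<lambda>y. ((2 * real k + 3) * y * L (Suc k) y - (real k + 1) * L k y) / (real k + 2))"
    by (rule ext) simp
  show ?case unfolding e
    by (rule derivative_eq_intros 3 refl | simp)+ (simp add: field_simps)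
qed

lemma dleg_DERIV: "(dleg k has_real_derivative ddleg k x) (at x)"
proof (induction k x rule: legendre.induct)
  case (1 x) then show ?case by simp
next
  case (2 x) then show ?case by simp
next
  case (3 k x)
  have e: "dleg (Suc (Suc k)) = (\<lambda>y. ((2 * real k + 3) * (L (Suc k) y + y * dleg (Suc k) y) - (real k + 1) * dleg k y) / (real k + 2))"
    by (rule ext) simp
  show ?case unfolding e
    by (rule derivative_eq_intros 3 leg_DERIV refl | simp)+
qed

lemma leg_one: "L k 1 = 1"
  by (induction k "1::real" rule: legendre.induct) (simp_all add: field_simps)

lemma leg_neg: "L k (-x) = (-1)^k * L k x"
  by (induction k x rule: legendre.induct) (simp_all add: field_simps)


lemma bc: "x * dleg (Suc k) x - dleg k x = (real k + 1) * L (Suc k) x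
         \<and> dleg (Suc k) x = x * dleg k x + (real k + 1) * L k x"
proof (induction k)
  case 0 then show ?case by simp
next
  case (Suc k)
  have b: "dleg k x = x * dleg (Suc k) x - (real k + 1) * L (Suc k) x" using Suc.IH by linarith
  have c0: "dleg (Suc k) x = x * dleg k x + (real k + 1) * L k x" using Suc.IH by blast
  have dr: "(real k + 2) * dleg (Suc (Suc k)) x = (2 * real k + 3) * (L (Suc k) x + x * dleg (Suc k) x) - (real k + 1) * dleg k x"
    using dleg_rec[of "Suc k" x] by (simp add: algebra_simps)
  have c: "dleg (Suc (Suc k)) x = x * dleg (Suc k) x + (real k + 2) * L (Suc k) x"
  proof -
    have "(real k + 2) * dleg (Suc (Suc k)) x = (real k + 2) * (x * dleg (Suc k) x + (real k + 2) * L (Suc k) x)"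
      unfolding dr b by (simp add: algebra_simps)
    then show ?thesis by simp
  qed
  have d: "(x^2 - 1) * dleg (Suc k) x = (real k + 1) * (x * L (Suc k) x - L k x)"
  proof -
    have "dleg (Suc k) x = x * (x * dleg (Suc k) x - (real k + 1) * L (Suc k) x) + (real k + 1) * L k x"
      using c0 b by simp
    then show ?thesis by (simp add: algebra_simps power2_eq_square)
  qed
  have r: "(real k + 2) * L (Suc (Suc k)) x = (2 * real k + 3) * x * L (Suc k) x - (real k + 1) * L k x"
    using leg_rec[of "Suc k" x] by (simp add: algebra_simps)
  have "x * dleg (Suc (Suc k)) x - dleg (Suc k) x = (x^2 - 1) * dleg (Suc k) x + (real k + 2) * x * L (Suc k) x"
    unfolding c by (simp add: algebra_simps power2_eq_square)
  also have "\<dots> = (real k + 2) * L (Suc (Suc k)) x" unfolding d r by (simp add: algebra_simps)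
  finally show ?case using c by (simp del: dleg.simps legendre.simps add: algebra_simps)
qed

lemma leg_b: "1 \<le> k \<Longrightarrow> x * dleg k x - dleg (k - 1) x = real k * L k x"
  using bc[where k="k - 1" and x=x] by (cases k) auto

lemma leg_c: "dleg (Suc k) x = x * dleg k x + (real k + 1) * L k x"
  using bc by blast

lemma leg_a: "1 \<le> k \<Longrightarrow> dleg (Suc k) x - dleg (k - 1) x = (2 * real k + 1) * L k x"
  using leg_b[of k x] leg_c[of k x] by (simp add: algebra_simps)

lemma leg_d: "(x^2 - 1) * dleg k x = real k * (x * L k x - L (k - 1) x)"
proof (cases k)
  case 0 then show ?thesis by simp
next
  case (Suc j)
  have b: "dleg j x = x * dleg (Suc j) x - (real j + 1) * L (Suc j) x" using bc[where k=j and x=x] by linarith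
  have c0: "dleg (Suc j) x = x * dleg j x + (real j + 1) * L j x" using bc[where k=j and x=x] by blast
  have "dleg (Suc j) x = x * (x * dleg (Suc j) x - (real j + 1) * L (Suc j) x) + (real j + 1) * L j x"
    using c0 b by simp
  then show ?thesis using Suc by (simp add: algebra_simps power2_eq_square)
qed

lemma leg_ode: "(1 - x^2) * ddleg k x - 2 * x * dleg k x = - (real k * (real k + 1)) * L k x"
proof -
  have e: "(\<lambda>y. (y^2 - 1) * dleg k y) = (\<lambda>y. real k * (y * L k y - L (k - 1) y))"
    using leg_d by auto
  have d1: "((\<lambda>y. (y^2 - 1) * dleg k y) has_real_derivative (2 * x * dleg k x + (x^2 - 1) * ddleg k x)) (at x)"
    by (rule derivative_eq_intros dleg_DERIV refl | simp)+
  have d2: "((\<lambda>y. real k * (y * L k y - L (k - 1) y)) has_real_derivative real k * (L k x + x * dleg k x - dleg (k - 1) x)) (at x)"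
    by (rule derivative_eq_intros leg_DERIV refl | simp)+
  have "2 * x * dleg k x + (x^2 - 1) * ddleg k x = real k * (L k x + x * dleg k x - dleg (k - 1) x)"
    using DERIV_unique[OF d1 d2[folded e]] .
  moreover have "real k * (L k x + x * dleg k x - dleg (k - 1) x) = real k * (real k + 1) * L k x"
  proof (cases "k = 0")
    case True then show ?thesis by simp
  next
    case False then have "x * dleg k x - dleg (k - 1) x = real k * L k x" using leg_b by simp
    then show ?thesis by (simp add: algebra_simps)
  qed
  ultimately show ?thesis by (simp add: algebra_simps)
qed

lemma cont_L [continuous_intros]: "continuous_on S f \<Longrightarrow> continuous_on S (\<lambda>x. L k (f x))"
  by (rule continuous_on_compose2[of UNIV "L k"])
     (auto intro!: continuous_at_imp_continuous_on DERIV_isCont leg_DERIV)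

lemma int_lin3:
  fixes f g h :: "real \<Rightarrow> real"
  assumes "continuous_on {-1..1} f" "continuous_on {-1..1} g" "continuous_on {-1..1} h"
  shows "integral {-1..1} (\<lambda>x. a * f x + b * g x - c * h x :: real)
         = a * integral {-1..1} f + b * integral {-1..1} g - c * integral {-1..1} h"
proof -
  have i: "(\<lambda>x. a * f x) integrable_on {-1..1}" "(\<lambda>x. b * g x) integrable_on {-1..1}"
     "(\<lambda>x. c * h x) integrable_on {-1..1}" "(\<lambda>x. a * f x + b * g x) integrable_on {-1..1}"
    "f integrable_on {-1..1}" "g integrable_on {-1..1}" "h integrable_on {-1..1}"
    by (intro integrable_continuous_interval continuous_intros assms)+
  have "integral {-1..1} (\<lambda>x. a * f x + b * g x - c * h x)
      = integral {-1..1} (\<lambda>x. a * f x + b * g x) - integral {-1..1} (\<lambda>x. c * h x)"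
    by (rule integral_diff) (rule i)+
  also have "integral {-1..1} (\<lambda>x. a * f x + b * g x) = integral {-1..1} (\<lambda>x. a * f x) + integral {-1..1} (\<lambda>x. b * g x)"
    by (rule integral_add) (rule i)+
  finally show ?thesis using integral_mult i by simp
qed

lemma int_cmul: fixes f :: "real \<Rightarrow> real" shows "integral {-1..1} (\<lambda>x. a * f x :: real) = a * integral {-1..1} f"
  using integral_cmul[where c=a and f=f and S="{-1..1}"] by simp

lemma leg_orth:
  assumes "j \<noteq> k"
  shows "integral {-1..1} (\<lambda>x. L j x * L k x) = 0"
proof -
  define F where "F = (\<lambda>y. (1 - y^2) * (dleg j y * L k y - L j y * dleg k y))"
  define c where "c = real k * (real k + 1) - real j * (real j + 1)"
  have dF: "(F has_real_derivative c * (L j x * L k x)) (at x)" for x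
  proof -
    have d: "(F has_real_derivative (-2 * x * (dleg j x * L k x - L j x * dleg k x)
          + (1 - x^2) * (ddleg j x * L k x - L j x * ddleg k x))) (at x)"
      unfolding F_def
      apply (rule derivative_eq_intros leg_DERIV dleg_DERIV refl)+
      apply (simp add: algebra_simps)
      done
    have "-2 * x * (dleg j x * L k x - L j x * dleg k x)
          + (1 - x^2) * (ddleg j x * L k x - L j x * ddleg k x)
        = L k x * ((1 - x^2) * ddleg j x - 2 * x * dleg j x) - L j x * ((1 - x^2) * ddleg k x - 2 * x * dleg k x)"
      by (simp add: algebra_simps)
    also have "\<dots> = c * (L j x * L k x)" unfolding leg_ode c_def by (simp add: algebra_simps)
    finally show ?thesis using d by simp
  qed
  have "((\<lambda>x. c * (L j x * L k x)) has_integral F 1 - F (-1)) {-1..1}"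
    by (rule fundamental_theorem_of_calculus)
       (auto intro!: has_vector_derivative_at_within dF[unfolded has_real_derivative_iff_has_vector_derivative])
  then have "((\<lambda>x. c * (L j x * L k x)) has_integral 0) {-1..1}"
    by (simp add: F_def)
  then have "integral {-1..1} (\<lambda>x. c * (L j x * L k x)) = 0"
    by (rule integral_unique)
  then have "c * integral {-1..1} (\<lambda>x. L j x * L k x) = 0" by (simp only: int_cmul)
  moreover have "c \<noteq> 0"
  proof
    assume "c = 0"
    then have "(real k - real j) * (real k + real j + 1) = 0" unfolding c_def by (simp add: algebra_simps)
    then have "real k = real j" by (simp add: add_nonneg_eq_0_iff)
    with assms show False by simp
  qed
  ultimately show ?thesis by simp
qed



declare legendre.simps(3)[simp del] dleg.simps(3)[simp del] ddleg.simps(3)[simp del]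

lemma leg_norm: "integral {-1..1} (\<lambda>x. L k x * L k x) = 2 / (2 * real k + 1)"
proof (induction k)
  case 0 then show ?case by simp
next
  case (Suc k)
  have pt: "(real k + 1) * (2 * real k + 3) * (L (Suc k) x * L (Suc k) x)
     = (2 * real k + 1) * (real k + 2) * (L k x * L (Suc (Suc k)) x)
       + (2 * real k + 1) * (real k + 1) * (L k x * L k x)
       - real k * (2 * real k + 3) * (L (Suc k) x * L (k - 1) x)" for x
  proof -
    have r1: "(real k + 1) * L (Suc k) x = (2 * real k + 1) * x * L k x - real k * L (k - 1) x"
      by (rule leg_rec)
    have r2: "(2 * real k + 3) * x * L (Suc k) x = (real k + 2) * L (Suc (Suc k)) x + (real k + 1) * L k x"
      using leg_rec[of "Suc k" x] by (simp add: algebra_simps)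
    have "(real k + 1) * (2 * real k + 3) * (L (Suc k) x * L (Suc k) x)
        = (2 * real k + 3) * L (Suc k) x * ((real k + 1) * L (Suc k) x)" by (simp add: algebra_simps)
    also have "\<dots> = (2 * real k + 3) * L (Suc k) x * ((2 * real k + 1) * x * L k x - real k * L (k - 1) x)"
      by (simp only: r1)
    also have "\<dots> = (2 * real k + 1) * L k x * ((2 * real k + 3) * x * L (Suc k) x)
        - real k * (2 * real k + 3) * (L (Suc k) x * L (k - 1) x)" by (simp add: algebra_simps)
    also have "\<dots> = (2 * real k + 1) * L k x * ((real k + 2) * L (Suc (Suc k)) x + (real k + 1) * L k x)
        - real k * (2 * real k + 3) * (L (Suc k) x * L (k - 1) x)" by (simp only: r2)
    also have "\<dots> = (2 * real k + 1) * (real k + 2) * (L k x * L (Suc (Suc k)) x)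
       + (2 * real k + 1) * (real k + 1) * (L k x * L k x)
       - real k * (2 * real k + 3) * (L (Suc k) x * L (k - 1) x)" by (simp add: algebra_simps)
    finally show ?thesis .
  qed
  have "(real k + 1) * (2 * real k + 3) * integral {-1..1} (\<lambda>x. L (Suc k) x * L (Suc k) x)
      = integral {-1..1} (\<lambda>x. (real k + 1) * (2 * real k + 3) * (L (Suc k) x * L (Suc k) x))"
    by (simp only: int_cmul)
  also have "\<dots> = integral {-1..1} (\<lambda>x. (2 * real k + 1) * (real k + 2) * (L k x * L (Suc (Suc k)) x)
       + (2 * real k + 1) * (real k + 1) * (L k x * L k x)
       - real k * (2 * real k + 3) * (L (Suc k) x * L (k - 1) x))"
    by (simp only: pt)
  also have "\<dots> = (2 * real k + 1) * (real k + 2) * integral {-1..1} (\<lambda>x. L k x * L (Suc (Suc k)) x)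
       + (2 * real k + 1) * (real k + 1) * integral {-1..1} (\<lambda>x. L k x * L k x)
       - real k * (2 * real k + 3) * integral {-1..1} (\<lambda>x. L (Suc k) x * L (k - 1) x)"
    by (rule int_lin3) (intro continuous_intros)+
  also have "\<dots> = (2 * real k + 1) * (real k + 1) * (2 / (2 * real k + 1))"
    using leg_orth[of k "Suc (Suc k)"] leg_orth[of "Suc k" "k - 1"] Suc.IH by simp
  also have "\<dots> = 2 * (real k + 1)" by (simp add: field_simps)
  finally have "(real k + 1) * ((2 * real k + 3) * integral {-1..1} (\<lambda>x. L (Suc k) x * L (Suc k) x))
      = (real k + 1) * 2" by (simp add: algebra_simps)
  then have "(real k + 1) * ((2 * real k + 3) * integral {-1..1} (\<lambda>x. L (Suc k) x * L (Suc k) x) - 2) = 0"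
    by (simp add: algebra_simps)
  then have "(2 * real k + 3) * integral {-1..1} (\<lambda>x. L (Suc k) x * L (Suc k) x) = 2"
    by simp
  then show ?case by (simp add: field_simps)
qed

lemma leg_triple: "i + k < j \<Longrightarrow> integral {-1..1} (\<lambda>x. L i x * L k x * L j x) = 0"
proof (induction k arbitrary: i rule: less_induct)
  case (less k)
  show ?case
  proof (cases k)
    case 0
    then show ?thesis using leg_orth[of i j] less.prems by simp
  next
    case (Suc m)
    have pt: "(real m + 1) * (2 * real i + 1) * (L i x * L (Suc m) x * L j x)
      = (2 * real m + 1) * (real i + 1) * (L (Suc i) x * L m x * L j x)
      + (2 * real m + 1) * real i * (L (i - 1) x * L m x * L j x)
      - real m * (2 * real i + 1) * (L i x * L (m - 1) x * L j x)" for x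
    proof -
      have r1: "(real m + 1) * L (Suc m) x = (2 * real m + 1) * x * L m x - real m * L (m - 1) x"
        by (rule leg_rec)
      have r2: "(2 * real i + 1) * x * L i x = (real i + 1) * L (Suc i) x + real i * L (i - 1) x"
        using leg_rec[of i x] by (simp add: algebra_simps)
      have "(real m + 1) * (2 * real i + 1) * (L i x * L (Suc m) x * L j x)
          = (2 * real i + 1) * L i x * L j x * ((real m + 1) * L (Suc m) x)" by (simp add: algebra_simps)
      also have "\<dots> = (2 * real i + 1) * L i x * L j x * ((2 * real m + 1) * x * L m x - real m * L (m - 1) x)"
        by (simp only: r1)
      also have "\<dots> = (2 * real m + 1) * L m x * L j x * ((2 * real i + 1) * x * L i x)
          - real m * (2 * real i + 1) * (L i x * L (m - 1) x * L j x)" by (simp add: algebra_simps)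
      also have "\<dots> = (2 * real m + 1) * L m x * L j x * ((real i + 1) * L (Suc i) x + real i * L (i - 1) x)
          - real m * (2 * real i + 1) * (L i x * L (m - 1) x * L j x)" by (simp only: r2)
      also have "\<dots> = (2 * real m + 1) * (real i + 1) * (L (Suc i) x * L m x * L j x)
      + (2 * real m + 1) * real i * (L (i - 1) x * L m x * L j x)
      - real m * (2 * real i + 1) * (L i x * L (m - 1) x * L j x)" by (simp add: algebra_simps)
      finally show ?thesis .
    qed
    have z1: "integral {-1..1} (\<lambda>x. L (Suc i) x * L m x * L j x) = 0"
      using less.IH[of m "Suc i"] less.prems Suc by simp
    have z2: "integral {-1..1} (\<lambda>x. L (i - 1) x * L m x * L j x) = 0"
      using less.IH[of m "i - 1"] less.prems Suc by simp
    have z3: "integral {-1..1} (\<lambda>x. L i x * L (m - 1) x * L j x) = 0"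
      using less.IH[of "m - 1" i] less.prems Suc by simp
    have "(real m + 1) * (2 * real i + 1) * integral {-1..1} (\<lambda>x. L i x * L (Suc m) x * L j x)
      = integral {-1..1} (\<lambda>x. (real m + 1) * (2 * real i + 1) * (L i x * L (Suc m) x * L j x))"
      by (simp only: int_cmul)
    also have "\<dots> = integral {-1..1} (\<lambda>x. (2 * real m + 1) * (real i + 1) * (L (Suc i) x * L m x * L j x)
      + (2 * real m + 1) * real i * (L (i - 1) x * L m x * L j x)
      - real m * (2 * real i + 1) * (L i x * L (m - 1) x * L j x))"
      by (simp only: pt)
    also have "\<dots> = 0"
      apply (subst int_lin3)
      apply (intro continuous_intros)+
      apply (simp only: z1 z2 z3)
      done
    finally show ?thesis using Suc by simp
  qed
qed

lemma leg_bound_pos: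
  assumes "0 \<le> x" "x \<le> 1"
  shows "(L k x)^2 \<le> 1"
proof (cases "k = 0")
  case True then show ?thesis by simp
next
  case False
  define K where "K = real k * (real k + 1)"
  have K: "K > 0" using False by (simp add: K_def)
  define f where "f = (\<lambda>y. (L k y)^2 + (1 / K) * ((1 - y^2) * (dleg k y)^2))"
  have df: "(f has_real_derivative 2 * y * (dleg k y)^2 / K) (at y)" for y
  proof -
    have d: "(f has_real_derivative (2 * L k y * dleg k y
        + ((- (2 * y)) * (dleg k y)^2 + (1 - y^2) * (2 * dleg k y * ddleg k y)) / K)) (at y)"
      unfolding f_def
      apply (rule derivative_eq_intros leg_DERIV dleg_DERIV refl)+
      apply (simp add: field_simps power2_eq_square)
      done
    have o: "(1 - y^2) * ddleg k y = 2 * y * dleg k y - K * L k y"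
      using leg_ode[of y k] unfolding K_def by (simp add: algebra_simps)
    have "2 * L k y * dleg k y + ((- (2 * y)) * (dleg k y)^2 + (1 - y^2) * (2 * dleg k y * ddleg k y)) / K
        = 2 * L k y * dleg k y + ((- (2 * y)) * (dleg k y)^2 + 2 * dleg k y * ((1 - y^2) * ddleg k y)) / K"
      by (simp add: algebra_simps)
    also have "\<dots> = 2 * L k y * dleg k y + ((- (2 * y)) * (dleg k y)^2 + 2 * dleg k y * (2 * y * dleg k y - K * L k y)) / K"
      by (simp only: o)
    also have "\<dots> = 2 * y * (dleg k y)^2 / K" using K by (simp add: field_simps power2_eq_square)
    finally show ?thesis using d by simp
  qed
  have "f x \<le> f 1"
  proof (rule DERIV_nonneg_imp_nondecreasing[OF assms(2)])
    fix y assume y: "x \<le> y" "y \<le> 1"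
    have "0 \<le> 2 * y * (dleg k y)^2 / K" using y assms K by (intro divide_nonneg_pos mult_nonneg_nonneg) auto
    then show "\<exists>z. (f has_real_derivative z) (at y) \<and> 0 \<le> z" using df by blast
  qed
  also have "f 1 = 1" by (simp add: f_def leg_one)
  finally have "f x \<le> 1" .
  moreover have "(L k x)^2 \<le> f x"
    unfolding f_def using K assms by (auto intro!: mult_nonneg_nonneg simp: abs_square_le_1)
  ultimately show ?thesis by simp
qed

lemma leg_bound:
  assumes "-1 \<le> x" "x \<le> 1"
  shows "\<bar>L k x\<bar> \<le> 1"
proof (cases "0 \<le> x")
  case True then show ?thesis using leg_bound_pos[of x k] assms by (simp add: abs_square_le_1)
next
  case False
  then have "(L k (-x))^2 \<le> 1" using leg_bound_pos[of "-x" k] assms by simp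
  moreover have "\<bar>L k (-x)\<bar> = \<bar>L k x\<bar>" by (simp add: leg_neg abs_mult power_abs)
  ultimately show ?thesis by (simp add: abs_square_le_1)
qed

lemma deta:
  assumes "2 \<le> m"
  shows "deriv (bs_eta m) x = - ((2 * real m - 1) / sqrt (4 * real m - 2)) * L (m - 1) x"
proof -
  have d: "(bs_eta m has_real_derivative (dleg (m - 2) x - dleg m x) / sqrt (4 * real m - 2)) (at x)"
  proof -
    have e: "bs_eta m = (\<lambda>y. (1 / sqrt (4 * real m - 2)) * (L (m - 2) y - L m y))"
      by (rule ext) (simp add: bs_eta_def)
    show ?thesis unfolding e
      by (rule derivative_eq_intros leg_DERIV refl)+ simp
  qed
  have a: "dleg (Suc (m - 1)) x - dleg (m - 1 - 1) x = (2 * real (m - 1) + 1) * L (m - 1) x"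
    using assms by (intro leg_a) simp
  have e1: "Suc (m - 1) = m" "m - 1 - 1 = m - 2" "real (m - 1) = real m - 1" using assms by auto
  have "dleg m x - dleg (m - 2) x = (2 * real m - 1) * L (m - 1) x"
    using a unfolding e1 by (simp add: algebra_simps)
  then have eq: "dleg (m - 2) x - dleg m x = - ((2 * real m - 1) * L (m - 1) x)" by simp
  have "(dleg (m - 2) x - dleg m x) / sqrt (4 * real m - 2) = - ((2 * real m - 1) / sqrt (4 * real m - 2)) * L (m - 1) x"
    unfolding eq by simp
  with d show ?thesis by (simp add: DERIV_imp_deriv)
qed

lemma series_summable:
  assumes hc: "\<And>k. \<bar>c k\<bar> \<le> B * q ^ k" and q: "0 \<le> q" "q < 1" and x: "-1 \<le> x" "x \<le> 1"
  shows "summable (\<lambda>k. c k * L k x)"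
proof (rule summable_comparison_test')
  show "summable (\<lambda>k. B * q ^ k)" using q by (intro summable_mult summable_geometric) simp
  fix k
  have "\<bar>c k * L k x\<bar> = \<bar>c k\<bar> * \<bar>L k x\<bar>" by (simp add: abs_mult)
  also have "\<dots> \<le> \<bar>c k\<bar> * 1" using leg_bound[OF x] by (intro mult_left_mono) auto
  also have "\<dots> \<le> B * q ^ k" using hc by simp
  finally show "norm (c k * L k x) \<le> B * q ^ k" by simp
qed

lemma tail_bound:
  assumes hc: "\<And>k. \<bar>c k\<bar> \<le> B * q ^ k" and q: "0 \<le> q" "q < 1" and x: "-1 \<le> x" "x \<le> 1"
  shows "\<bar>legendre_series c x - (\<Sum>k<d. c k * L k x)\<bar> \<le> B * q ^ d / (1 - q)"
proof -
  have s: "summable (\<lambda>k. c k * L k x)" by (rule series_summable[OF hc q x])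
  have e: "legendre_series c x - (\<Sum>k<d. c k * L k x) = (\<Sum>k. c (k + d) * L (k + d) x)"
    unfolding legendre_series_def using suminf_split_initial_segment[OF s, of d] by simp
  have sg: "summable (\<lambda>k. B * q ^ d * q ^ k)" using q by (intro summable_mult summable_geometric) simp
  have b: "norm (c (k + d) * L (k + d) x) \<le> B * q ^ d * q ^ k" for k
  proof -
    have "\<bar>c (k + d) * L (k + d) x\<bar> = \<bar>c (k + d)\<bar> * \<bar>L (k + d) x\<bar>" by (simp add: abs_mult)
    also have "\<dots> \<le> \<bar>c (k + d)\<bar> * 1" using leg_bound[OF x] by (intro mult_left_mono) auto
    also have "\<dots> \<le> B * q ^ (k + d)" using hc by simp
    finally show ?thesis by (simp add: power_add algebra_simps)
  qed
  have sn: "summable (\<lambda>k. norm (c (k + d) * L (k + d) x))"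
    by (rule summable_comparison_test'[OF sg]) (use b in simp)
  have "\<bar>\<Sum>k. c (k + d) * L (k + d) x\<bar> \<le> (\<Sum>k. norm (c (k + d) * L (k + d) x))"
    using summable_norm[OF sn] by simp
  also have "\<dots> \<le> (\<Sum>k. B * q ^ d * q ^ k)" by (rule suminf_le[OF b sn sg])
  also have "\<dots> = B * q ^ d / (1 - q)" using q by (simp add: suminf_mult suminf_geometric)
  finally show ?thesis using e by simp
qed

lemma series_cont:
  assumes hc: "\<And>k. \<bar>c k\<bar> \<le> B * q ^ k" and q: "0 \<le> q" "q < 1"
  shows "continuous_on {-1..1} (legendre_series c)"
proof -
  have u: "uniform_limit {-1..1} (\<lambda>N x. \<Sum>k<N. c k * L k x) (\<lambda>x. \<Sum>k. c k * L k x) sequentially"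
  proof (rule Weierstrass_m_test)
    show "summable (\<lambda>k. B * q ^ k)" using q by (intro summable_mult summable_geometric) simp
    fix k and x :: real assume x: "x \<in> {-1..1}"
    have "\<bar>c k * L k x\<bar> = \<bar>c k\<bar> * \<bar>L k x\<bar>" by (simp add: abs_mult)
    also have "\<dots> \<le> \<bar>c k\<bar> * 1" using leg_bound x by (intro mult_left_mono) auto
    also have "\<dots> \<le> B * q ^ k" using hc by simp
    finally show "norm (c k * L k x) \<le> B * q ^ k" by simp
  qed
  have "continuous_on {-1..1} (\<lambda>x. \<Sum>k. c k * L k x)"
    by (rule uniform_limit_theorem[OF _ u]) (auto intro!: always_eventually continuous_intros)
  then show ?thesis unfolding legendre_series_def[abs_def] .
qed

lemma weight_sq:
  assumes "2 \<le> m"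
  shows "((2 * real m - 1) / sqrt (4 * real m - 2))^2 = (2 * real m - 1) / 2"
    and "(2 * real m - 1) / sqrt (4 * real m - 2) \<ge> 0"
proof -
  have p: "4 * real m - 2 > 0" "2 * real m - 1 > 0" using assms by auto
  have "((2 * real m - 1) / sqrt (4 * real m - 2))^2 = (2 * real m - 1)^2 / (4 * real m - 2)"
    using p by (simp add: power_divide)
  also have "\<dots> = (2 * real m - 1) / 2" using p by (simp add: field_simps power2_eq_square)
  finally show "((2 * real m - 1) / sqrt (4 * real m - 2))^2 = (2 * real m - 1) / 2" .
  show "(2 * real m - 1) / sqrt (4 * real m - 2) \<ge> 0" using p by simp
qed

lemma amgm_abs: "\<bar>u\<bar> * \<bar>v\<bar> \<le> (u^2 + v^2) / (2::real)"
proof -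
  have "0 \<le> (\<bar>u\<bar> - \<bar>v\<bar>)^2" by simp
  then show ?thesis by (simp add: power2_eq_square algebra_simps)
qed

lemma a1_bound:
  assumes hc: "\<And>k. \<bar>c k\<bar> \<le> B * q ^ k" and q: "0 \<le> q" "q < 1" and B: "0 \<le> B"
    and m: "2 \<le> m" and n: "2 \<le> n"
  shows "\<bar>a1 c m n\<bar> \<le> B * q ^ (nat \<bar>int m - int n\<bar>) / (1 - q)"
proof -
  define i where "i = m - 1"
  define j where "j = n - 1"
  define d where "d = nat \<bar>int m - int n\<bar>"
  define T where "T = B * q ^ d / (1 - q)"
  have T: "0 \<le> T" unfolding T_def using q B by simp
  define am where "am = (2 * real m - 1) / sqrt (4 * real m - 2)"
  define an where "an = (2 * real n - 1) / sqrt (4 * real n - 2)"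
  define \<nu> where "\<nu> = legendre_series c"
  define t where "t = (\<lambda>x. \<nu> x - (\<Sum>k<d. c k * L k x))"
  have c\<nu>: "continuous_on {-1..1} \<nu>" unfolding \<nu>_def by (rule series_cont[OF hc q])
  have ct: "continuous_on {-1..1} t" unfolding t_def by (intro continuous_intros c\<nu>)
  have tb: "\<bar>t x\<bar> \<le> T" if "x \<in> {-1..1}" for x
    unfolding t_def T_def \<nu>_def using that by (intro tail_bound[OF hc q]) auto
  have a1e: "a1 c m n = am * an * integral {-1..1} (\<lambda>x. \<nu> x * L i x * L j x)"
  proof -
    have "a1 c m n = integral {-1..1} (\<lambda>x. (am * an) * (\<nu> x * L i x * L j x))"
      unfolding a1_def deta[OF m] deta[OF n] \<nu>_def am_def an_def i_def j_def
      by (simp add: algebra_simps)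
    then show ?thesis by (simp only: int_cmul)
  qed
  have zero: "integral {-1..1} (\<lambda>x. L k x * L i x * L j x) = 0" if k: "k < d" for k
  proof (cases "i \<le> j")
    case True
    then have "i + k < j" using k m n unfolding d_def i_def j_def by auto
    then have "integral {-1..1} (\<lambda>x. L i x * L k x * L j x) = 0" by (rule leg_triple)
    then show ?thesis by (simp add: mult_ac)
  next
    case False
    then have "j + k < i" using k m n unfolding d_def i_def j_def by auto
    then have "integral {-1..1} (\<lambda>x. L j x * L k x * L i x) = 0" by (rule leg_triple)
    then show ?thesis by (simp add: mult_ac)
  qed
  have split: "integral {-1..1} (\<lambda>x. \<nu> x * L i x * L j x) = integral {-1..1} (\<lambda>x. t x * L i x * L j x)"
  proof -
    have pt: "\<nu> x * L i x * L j x = t x * L i x * L j x + (\<Sum>k<d. c k * (L k x * L i x * L j x))" for x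
      unfolding t_def by (simp add: sum_distrib_left sum_distrib_right algebra_simps)
    have "integral {-1..1} (\<lambda>x. \<nu> x * L i x * L j x)
        = integral {-1..1} (\<lambda>x. t x * L i x * L j x) + integral {-1..1} (\<lambda>x. \<Sum>k<d. c k * (L k x * L i x * L j x))"
      unfolding pt
      by (rule integral_add; intro integrable_continuous_interval continuous_intros ct)
    also have "integral {-1..1} (\<lambda>x. \<Sum>k<d. c k * (L k x * L i x * L j x)) = (\<Sum>k<d. integral {-1..1} (\<lambda>x. c k * (L k x * L i x * L j x)))"
      by (rule integral_sum) (auto intro!: integrable_continuous_interval continuous_intros)
    also have "\<dots> = 0" by (simp add: int_cmul zero)
    finally show ?thesis by simp
  qed
  have sq: "am^2 = (2 * real m - 1) / 2" "an^2 = (2 * real n - 1) / 2" "am \<ge> 0" "an \<ge> 0"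
    unfolding am_def an_def using weight_sq m n by auto
  have Ni: "integral {-1..1} (\<lambda>x. L i x * L i x) = 2 / (2 * real m - 1)"
    using leg_norm[of i] m unfolding i_def by (simp add: of_nat_diff algebra_simps)
  have Nj: "integral {-1..1} (\<lambda>x. L j x * L j x) = 2 / (2 * real n - 1)"
    using leg_norm[of j] n unfolding j_def by (simp add: of_nat_diff algebra_simps)
  have "\<bar>a1 c m n\<bar> = norm (integral {-1..1} (\<lambda>x. (am * an) * (t x * L i x * L j x)))"
    unfolding a1e split by (simp only: int_cmul real_norm_def)
  also have "\<dots> \<le> integral {-1..1} (\<lambda>x. (T / 2 * am^2) * (L i x * L i x) + (T / 2 * an^2) * (L j x * L j x))"
  proof (rule integral_norm_bound_integral)
    show "(\<lambda>x. am * an * (t x * L i x * L j x)) integrable_on {-1..1}"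
      by (intro integrable_continuous_interval continuous_intros ct)
    show "(\<lambda>x. (T / 2 * am^2) * (L i x * L i x) + (T / 2 * an^2) * (L j x * L j x)) integrable_on {-1..1}"
      by (intro integrable_continuous_interval continuous_intros)
    fix x :: real assume x: "x \<in> {-1..1}"
    have "norm (am * an * (t x * L i x * L j x)) = \<bar>t x\<bar> * (\<bar>am * L i x\<bar> * \<bar>an * L j x\<bar>)"
      by (simp add: abs_mult)
    also have "\<dots> \<le> T * (((am * L i x)^2 + (an * L j x)^2) / 2)"
      by (rule mult_mono[OF tb[OF x] amgm_abs T]) simp
    also have "\<dots> = (T / 2 * am^2) * (L i x * L i x) + (T / 2 * an^2) * (L j x * L j x)"
      by (simp add: power2_eq_square algebra_simps)
    finally show "norm (am * an * (t x * L i x * L j x)) \<le> (T / 2 * am^2) * (L i x * L i x) + (T / 2 * an^2) * (L j x * L j x)" .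
  qed
  also have "\<dots> = (T / 2 * am^2) * integral {-1..1} (\<lambda>x. L i x * L i x) + (T / 2 * an^2) * integral {-1..1} (\<lambda>x. L j x * L j x)"
    by (subst integral_add) (auto intro!: integrable_continuous_interval continuous_intros simp: int_cmul)
  also have "\<dots> = T / 2 * ((2 * real m - 1) / 2 * (2 / (2 * real m - 1))) + T / 2 * ((2 * real n - 1) / 2 * (2 / (2 * real n - 1)))"
    unfolding Ni Nj sq by (simp only: mult.assoc)
  also have "(2 * real m - 1) / 2 * (2 / (2 * real m - 1)) = 1" using m by simp
  also have "(2 * real n - 1) / 2 * (2 / (2 * real n - 1)) = 1" using n by simp
  also have "T / 2 * 1 + T / 2 * 1 = T" by simp
  finally show ?thesis unfolding T_def d_def .
qed

theorem mainTheorem2: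
  fixes \<eta> C\<^sub>\<eta> :: real
  assumes "\<eta> > 0" and "C\<^sub>\<eta> > 0"
  shows "\<exists>C>0. \<forall>c :: nat \<Rightarrow> real.
           (\<forall>k. \<bar>c k\<bar> \<le> C\<^sub>\<eta> * exp (- \<eta> * real k)) \<longrightarrow>
           (\<forall>m n. 2 \<le> m \<longrightarrow> 2 \<le> n \<longrightarrow>
              \<bar>a1 c m n\<bar> \<le> C * exp (- \<eta> * \<bar>real n - real m\<bar>))"
proof -
  define q where "q = exp (- \<eta>)"
  have q: "0 \<le> q" "q < 1" unfolding q_def using assms by auto
  have ek: "exp (- \<eta> * real k) = q ^ k" for k
    unfolding q_def using exp_of_nat_mult[of k "- \<eta>"] by (simp add: mult.commute)
  define C where "C = C\<^sub>\<eta> / (1 - q)"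
  show ?thesis
  proof (intro exI[of _ C] conjI allI impI)
    show "C > 0" unfolding C_def using q assms by simp
    fix c :: "nat \<Rightarrow> real" and m n :: nat
    assume hc: "\<forall>k. \<bar>c k\<bar> \<le> C\<^sub>\<eta> * exp (- \<eta> * real k)" and m: "2 \<le> m" and n: "2 \<le> n"
    have hc': "\<bar>c k\<bar> \<le> C\<^sub>\<eta> * q ^ k" for k using hc ek by simp
    have "\<bar>a1 c m n\<bar> \<le> C\<^sub>\<eta> * q ^ (nat \<bar>int m - int n\<bar>) / (1 - q)"
      by (rule a1_bound[OF hc' q _ m n]) (use assms in simp)
    also have "q ^ (nat \<bar>int m - int n\<bar>) = exp (- \<eta> * \<bar>real n - real m\<bar>)"
    proof -
      have "real (nat \<bar>int m - int n\<bar>) = \<bar>real n - real m\<bar>" by linarith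
      then show ?thesis using ek[of "nat \<bar>int m - int n\<bar>"] by simp
    qed
    finally show "\<bar>a1 c m n\<bar> \<le> C * exp (- \<eta> * \<bar>real n - real m\<bar>)" unfolding C_def by simp
  qed
qed

end
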